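(* Define $g:\{0,1\}^*\to\mathbb{T}$ by $g(\epsilon)=\bullet$, $g(0)=\mathcal{L}$, $g(1)=\mathcal{R}$ and $g(b_1\cdots b_n)=g(b_1)\bowtie\cdots\bowtie g(b_n)$ for $b_i\in\{0,1\}$ (so that $g(s\cdot 0)=g(s)\bowtie\mathcal{L}$ and $g(s\cdot 1)=g(s)\bowtie\mathcal{R}$). Then $g$ is a bijection from $\{0,1\}^*$ onto the set $\mathbb{U}$ of unary trees, and for all $x,y\in\{0,1\}^*$: $x\preceq y$ (i.e. there is $z$ with $x\cdot z=y$) iff $g(y)\sqsubseteq g(x)$.
   Context: A tree share is a finite binary tree whose leaves are labelled $\bullet$ (black) or $\circ$ (white), in canonical form: no subtree has the form $\mathrm{Node}(\bullet,\bullet)$ or $\mathrm{Node}(\circ,\circ)$ (such subtrees are identified with the leaf $\bullet$, resp. $\circ$). $\mathbb{T}$ denotes the set of tree shares. $\tau_1\sqcup\tau_2$ is computed by unfolding both trees (replacing a leaf $\ell$ by $\mathrm{Node}(\ell,\ell)$ as needed) to a common shape, taking Boolean join leafwise ($\bullet$ = true, $\circ$ = false), and refolding to canonical form. $\tau_1\sqsubseteq\tau_2$ means $\tau_1\sqcup\tau_2=\tau_2$. The product $\tau_1\bowtie\tau_2$ is obtained by replacing every $\bullet$ leaf of $\tau_1$ by a copy of $\tau_2$ and refolding to canonical form. $\mathcal{L}=\mathrm{Node}(\bullet,\circ)$ and $\mathcal{R}=\mathrm{Node}(\circ,\bullet)$. A unary tree is a tree share with exactly one black leaf; $\mathbb{U}$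 is the set of unary trees. *)

theory Defs
  imports Main
begin

text \<open>Binary trees with Boolean leaves: True = black, False = white.\<close>
datatype tree = Leaf bool | Node tree tree

fun canonical :: "tree \<Rightarrow> bool" where
  "canonical (Leaf b) = True"
| "canonical (Node l r) =
     (canonical l \<and> canonical r \<and> (\<forall>b. \<not> (l = Leaf b \<and> r = Leaf b)))"

definition TT :: "tree set" where
  "TT = {t. canonical t}"

fun mk :: "tree \<Rightarrow> tree \<Rightarrow> tree" where
  "mk (Leaf a) (Leaf b) = (if a = b then Leaf a else Node (Leaf a) (Leaf b))"
| "mk l r = Node l r"

fun norm :: "tree \<Rightarrow> tree" where
  "norm (Leaf b) = Leaf b"
| "norm (Node l r) = mk (norm l) (norm r)"

text \<open>Leafwise join after unfolding leaves to a common shape (a leaf is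
  unfolded to Node (Leaf a) (Leaf a) as needed).\<close>
fun join_raw :: "tree \<Rightarrow> tree \<Rightarrow> tree" where
  "join_raw (Leaf a) (Leaf b) = Leaf (a \<or> b)"
| "join_raw (Leaf a) (Node c d) = Node (join_raw (Leaf a) c) (join_raw (Leaf a) d)"
| "join_raw (Node a b) (Leaf c) = Node (join_raw a (Leaf c)) (join_raw b (Leaf c))"
| "join_raw (Node a b) (Node c d) = Node (join_raw a c) (join_raw b d)"

definition tjoin :: "tree \<Rightarrow> tree \<Rightarrow> tree" where
  "tjoin t1 t2 = norm (join_raw t1 t2)"

definition tle :: "tree \<Rightarrow> tree \<Rightarrow> bool" where
  "tle t1 t2 \<longleftrightarrow> tjoin t1 t2 = t2"

fun subst_black :: "tree \<Rightarrow> tree \<Rightarrow> tree" where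
  "subst_black (Leaf b) t = (if b then t else Leaf False)"
| "subst_black (Node l r) t = Node (subst_black l t) (subst_black r t)"

definition bowtie :: "tree \<Rightarrow> tree \<Rightarrow> tree" where
  "bowtie t1 t2 = norm (subst_black t1 t2)"

definition LL :: tree where "LL = Node (Leaf True) (Leaf False)"
definition RR :: tree where "RR = Node (Leaf False) (Leaf True)"

fun blacks :: "tree \<Rightarrow> nat" where
  "blacks (Leaf b) = (if b then 1 else 0)"
| "blacks (Node l r) = blacks l + blacks r"

definition UU :: "tree set" where
  "UU = {t. t \<in> TT \<and> blacks t = 1}"

text \<open>Bits: False = 0, True = 1.  g(b1...bn) = g(b1) \<bowtie> ... \<bowtie> g(bn),
  associated to the left, with g(empty) = black.\<close>
definition gbit :: "bool \<Rightarrow> tree" where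
  "gbit b = (if b then RR else LL)"

definition g :: "bool list \<Rightarrow> tree" where
  "g s = fold (\<lambda>b acc. bowtie acc (gbit b)) s (Leaf True)"

end

theory Submission
  imports Defs
begin

fun pt :: "bool list \<Rightarrow> tree \<Rightarrow> tree" where
  "pt [] t = t"
| "pt (False # s) t = Node (pt s t) (Leaf False)"
| "pt (True # s) t = Node (Leaf False) (pt s t)"

abbreviation p where "p s \<equiv> pt s (Leaf True)"

lemma pt_app: "pt s (pt z t) = pt (s @ z) t"
  by (induction s t rule: pt.induct) auto

lemma pt_nf: "t \<noteq> Leaf False \<Longrightarrow> pt s t \<noteq> Leaf False"
  by (induction s t rule: pt.induct) auto

lemma mk_node: "\<not>(\<exists>b. l = Leaf b \<and> r = Leaf b) \<Longrightarrow> mk l r = Node l r"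
  by (cases "(l,r)" rule: mk.cases) auto

lemma mk_L: "l \<noteq> Leaf False \<Longrightarrow> mk l (Leaf False) = Node l (Leaf False)"
  by (cases l) auto
lemma mk_R: "l \<noteq> Leaf False \<Longrightarrow> mk (Leaf False) l = Node (Leaf False) l"
  by (cases l) auto

lemma norm_can: "canonical t \<Longrightarrow> norm t = t"
  by (induction t) (auto simp: mk_node)

lemma pt_leaf: "t \<noteq> Leaf False \<Longrightarrow> pt s t = Leaf b \<Longrightarrow> b"
  using pt_nf by (cases b) auto

lemma can_pt: "canonical t \<Longrightarrow> t \<noteq> Leaf False \<Longrightarrow> canonical (pt s t)"
  by (induction s t rule: pt.induct) (auto simp: pt_nf dest: pt_leaf)

lemma blacks_pt: "blacks (pt s t) = blacks t"
  by (induction s t rule: pt.induct) auto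

lemma subst_pt: "subst_black (pt s (Leaf True)) t = pt s t"
  by (induction s t rule: pt.induct) auto

lemma norm_pt: "norm t \<noteq> Leaf False \<Longrightarrow> norm (pt s t) = pt s (norm t)"
  by (induction s t rule: pt.induct) (auto simp: mk_L mk_R pt_nf)

lemma bowtie_p: "bowtie (p s) (p z) = p (s @ z)"
  unfolding bowtie_def subst_pt pt_app
  by (rule norm_can, rule can_pt) auto

lemma gbit_p: "gbit b = p [b]"
  by (cases b) (auto simp: gbit_def LL_def RR_def)

lemma g_p: "g s = p s"
proof (induction s rule: rev_induct)
  case Nil then show ?case by (simp add: g_def)
next
  case (snoc b s)
  have "g (s @ [b]) = bowtie (g s) (gbit b)" by (simp add: g_def)
  then show ?case using snoc by (simp add: gbit_p bowtie_p)
qed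

lemma inj_p: "p s = p t \<Longrightarrow> s = t"
proof (induction s arbitrary: t)
  case Nil then show ?case
    by (cases t) (auto split: bool.splits if_splits, (case_tac a; simp)+)
next
  case (Cons b s) then show ?case
    using pt_nf[of "Leaf True"] by (cases t; cases b) (auto, (case_tac a; simp)+)
qed

lemma zero_blacks: "canonical t \<Longrightarrow> blacks t = 0 \<Longrightarrow> t = Leaf False"
  by (induction t) (auto split: if_splits)

lemma surj_p: "canonical t \<Longrightarrow> blacks t = 1 \<Longrightarrow> \<exists>s. t = p s"
proof (induction t)
  case (Leaf b) then show ?case by (rule_tac x="[]" in exI) (auto split: if_splits)
next
  case (Node l r)
  show ?case
  proof (cases "blacks l = 1")
    case True
    then have "r = Leaf False" using Node zero_blacks by auto
    moreover obtain s where "l = p s" using Node True by auto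
    ultimately show ?thesis by (rule_tac x="False # s" in exI) auto
  next
    case False
    then have "l = Leaf False" "blacks r = 1" using Node zero_blacks by auto
    moreover obtain s where "r = p s" using Node \<open>blacks r = 1\<close> by auto
    ultimately show ?thesis by (rule_tac x="True # s" in exI) auto
  qed
qed

lemma join_F1: "join_raw (Leaf False) t = t"
  by (induction t) auto
lemma join_F2: "join_raw t (Leaf False) = t"
  by (induction t) auto

lemma join_T2: "norm (join_raw t (Leaf True)) = Leaf True"
  by (induction t) auto
lemma join_T1: "norm (join_raw (Leaf True) t) = Leaf True"
  by (induction t) auto

lemma join_pt: "join_raw (pt x a) (pt x b) = pt x (join_raw a b)"
  by (induction x a rule: pt.induct) auto


lemma order_fw: "tle (p (x @ z)) (p x)"
proof -
  have "join_raw (p (x @ z)) (p x) = pt x (join_raw (p z) (Leaf True))"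
    by (simp add: join_pt flip: pt_app)
  then show ?thesis unfolding tle_def tjoin_def
    by (simp add: norm_pt join_T2)
qed

lemma can_p: "canonical (p s)"
  by (rule can_pt) auto

lemma pnf: "p s \<noteq> Leaf False"
  by (rule pt_nf) auto

lemma order_bw: "tle (p y) (p x) \<Longrightarrow> \<exists>z. x @ z = y"
proof (induction x arbitrary: y)
  case Nil then show ?case by auto
next
  case (Cons b s y)
  have nT: "norm (join_raw (Leaf True) (p (b # s))) \<noteq> p (b # s)"
    using join_T1 by (cases b) auto
  show ?case
  proof (cases y)
    case Nil then show ?thesis using Cons.prems nT by (simp add: tle_def tjoin_def)
  next
    case (Cons c y')
    note yc = this
    have eq: "norm (join_raw (p (c # y')) (p (b # s))) = p (b # s)"
      using Cons.prems yc by (simp add: tle_def tjoin_def)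
    show ?thesis
    proof (cases b; cases c)
      assume "\<not> b" "\<not> c"
      with eq have "mk (norm (join_raw (p y') (p s))) (Leaf False) = Node (p s) (Leaf False)" by simp
      then have "norm (join_raw (p y') (p s)) = p s"
        by (cases "norm (join_raw (p y') (p s))") (auto split: if_splits)
      then obtain z where "s @ z = y'" using Cons.IH by (auto simp: tle_def tjoin_def)
      then show ?thesis using yc \<open>\<not> b\<close> \<open>\<not> c\<close> by auto
    next
      assume "b" "c"
      with eq have "mk (Leaf False) (norm (join_raw (p y') (p s))) = Node (Leaf False) (p s)" by simp
      then have "norm (join_raw (p y') (p s)) = p s"
        by (cases "norm (join_raw (p y') (p s))") (auto split: if_splits)
      then obtain z where "s @ z = y'" using Cons.IH by (auto simp: tle_def tjoin_def)
      then show ?thesis using yc \<open>b\<close> \<open>c\<close> by auto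
    next
      assume "\<not> b" "c"
      with eq have "mk (p s) (p y') = Node (p s) (Leaf False)"
        by (simp add: join_F1 join_F2 norm_can can_p)
      then show ?thesis using pnf[of s] pnf[of y'] by (cases "p s"; cases "p y'") (auto split: if_splits)
    next
      assume "b" "\<not> c"
      with eq have "mk (p y') (p s) = Node (Leaf False) (p s)"
        by (simp add: join_F1 join_F2 norm_can can_p)
      then show ?thesis using pnf[of s] pnf[of y'] by (cases "p s"; cases "p y'") (auto split: if_splits)
    qed
  qed
qed

theorem lemma3:
  shows "bij_betw g UNIV UU \<and>
         (\<forall>x y. (\<exists>z. x @ z = y) \<longleftrightarrow> tle (g y) (g x))"
proof (intro conjI allI)
  show "bij_betw g UNIV UU"
    unfolding bij_betw_def
  proof
    show "inj g" by (rule injI) (simp add: g_p inj_p)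
    show "range g = UU"
    proof
      show "range g \<subseteq> UU"
        by (auto simp: g_p UU_def TT_def blacks_pt intro!: can_pt)
      show "UU \<subseteq> range g"
        using surj_p by (auto simp: UU_def TT_def g_p)
    qed
  qed
  fix x y
  show "(\<exists>z. x @ z = y) \<longleftrightarrow> tle (g y) (g x)"
    using order_fw order_bw by (auto simp: g_p)
qed

end
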